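(* Fix integers $d\ge 1$ and $n\ge 1$. There exists a bijection $\phi_d:\mathcal{H}_n\to\mathcal{H}_n$ such that $\mathrm{dif}_d(\lambda)\ge\mathrm{mod}'_d(\phi_d(\lambda))$ for every $\lambda\in\mathcal{H}_n$. Moreover, for every $\lambda\in\mathcal{H}_n$, $\mathrm{dif}_d(\lambda)=0$ if and only if $\mathrm{mod}'_d(\phi_d(\lambda))=0$.
   Context: A partition is a finite nonempty weakly decreasing sequence $\lambda=(\lambda_1,\ldots,\lambda_k)$ of positive integers; $\ell(\lambda)=k$. The perimeter is $\Gamma(\lambda)=\lambda_1+\ell(\lambda)-1$; $\mathcal{H}_n$ is the set of partitions with perimeter $n$. $\mathrm{dif}_d(\lambda)=|\{i:1\le i<\ell(\lambda),\ \lambda_i-\lambda_{i+1}<d\}|$ and $\mathrm{mod}'_d(\lambda)=|\{i:1\le i\le\ell(\lambda),\ \lambda_i\not\equiv 1\pmod{d+1}\}|$. *)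

theory Defs
  imports Main
begin

text \<open>A partition is a nonempty weakly decreasing finite list of positive integers.
  Entries are stored as a list; list index i (0-based) corresponds to part lambda_(i+1).\<close>

definition is_partition :: "nat list \<Rightarrow> bool" where
  "is_partition xs \<longleftrightarrow> xs \<noteq> [] \<and> sorted_wrt (\<ge>) xs \<and> (\<forall>x\<in>set xs. 0 < x)"

definition perimeter :: "nat list \<Rightarrow> nat" where
  "perimeter xs = hd xs + length xs - 1"

definition H :: "nat \<Rightarrow> nat list set" where
  "H n = {xs. is_partition xs \<and> perimeter xs = n}"

definition dif :: "nat \<Rightarrow> nat list \<Rightarrow> nat" where
  "dif d xs = card {i. i + 1 < length xs \<and> int (xs ! i) - int (xs ! (i + 1)) < int d}"

definition modp :: "nat \<Rightarrow> nat list \<Rightarrow> nat" where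
  "modp d xs = card {i. i < length xs \<and> xs ! i mod (d + 1) \<noteq> 1 mod (d + 1)}"

end

theory Submission
  imports Defs
begin

fun pw :: "nat \<Rightarrow> bool list \<Rightarrow> nat list" where
  "pw c [] = []"
| "pw c (False # w) = pw (Suc c) w"
| "pw c (True # w) = pw c w @ [Suc c]"

definition W :: "nat \<Rightarrow> bool list set" where
  "W n = {w. length w = n \<and> w \<noteq> [] \<and> last w = True}"

fun tr :: "nat \<Rightarrow> nat \<Rightarrow> bool list \<Rightarrow> bool list" where
  "tr m s [] = []"
| "tr m s (True # w) = (s \<noteq> 0) # tr m s w"
| "tr m s (False # w) = (s = 0) # tr m (Suc s mod m) w"

fun itr :: "nat \<Rightarrow> nat \<Rightarrow> bool list \<Rightarrow> bool list" where
  "itr m s [] = []"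
| "itr m s (True # v) = (if s = 0 then False # itr m (Suc s mod m) v else True # itr m s v)"
| "itr m s (False # v) = (if s = 0 then True # itr m s v else False # itr m (Suc s mod m) v)"

lemma tr_itr: "tr m s (itr m s v) = v"
  by (induction m s v rule: itr.induct) auto

lemma length_itr: "length (itr m s v) = length v"
  by (induction m s v rule: itr.induct) auto

lemma length_tr: "length (tr m s v) = length v"
  by (induction m s v rule: tr.induct) auto

lemma tr_inj: "tr m s u = tr m s v \<Longrightarrow> u = v"
proof (induction u arbitrary: s v)
  case Nil
  then show ?case using length_tr[of m s v] by auto
next
  case (Cons a u)
  show ?case
  proof (cases v)
    case Nil
    then show ?thesis using Cons.prems length_tr[of m s "a # u"] by auto
  next
    case (Cons b v')
    then show ?thesis using Cons.prems Cons.IH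
      by (cases a; cases b; auto split: if_splits)
  qed
qed

fun mw :: "nat \<Rightarrow> nat \<Rightarrow> bool list \<Rightarrow> nat" where
  "mw m s [] = 0"
| "mw m s (True # w) = (if s \<noteq> 0 then 1 else 0) + mw m s w"
| "mw m s (False # w) = mw m (Suc s mod m) w"

fun dwf :: "nat \<Rightarrow> nat \<Rightarrow> bool \<Rightarrow> bool list \<Rightarrow> nat" where
  "dwf d r s [] = 0"
| "dwf d r s (False # w) = dwf d (Suc r) s w"
| "dwf d r s (True # w) = (if s \<and> r < d then 1 else 0) + dwf d 0 True w"

lemma claimB:
  assumes "1 \<le> d" "s < Suc d" "s \<noteq> 0 \<longrightarrow> b \<and> r < s"
  shows "mw (Suc d) s (w @ [True]) \<le> dwf d r b (tr (Suc d) s w @ [True])"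
  using assms
proof (induction w arbitrary: s r b)
  case Nil
  then show ?case by auto
next
  case (Cons a w)
  show ?case
  proof (cases a)
    case True
    then show ?thesis using Cons by auto
  next
    case False
    show ?thesis
    proof (cases "s = 0")
      case True
      have "Suc 0 mod Suc d = 1" using Cons.prems by auto
      then have "mw (Suc d) 1 (w @ [True]) \<le> dwf d 0 True (tr (Suc d) 1 w @ [True])"
        using Cons.IH[of 1 True 0] Cons.prems by auto
      then show ?thesis using False True \<open>Suc 0 mod Suc d = 1\<close> by auto
    next
      case s0: False
      show ?thesis
      proof (cases "Suc s = Suc d")
        case True
        then show ?thesis using False s0 Cons.IH[of 0 b "Suc r"] Cons.prems by auto
      next
        case False2: False
        then have "Suc s mod Suc d = Suc s" using Cons.prems by auto
        then show ?thesis using False s0 Cons.IH[of "Suc s" b "Suc r"] Cons.prems False2 by auto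
      qed
    qed
  qed
qed

lemma claimZ:
  assumes "1 \<le> d" "s < Suc d" "s = 0 \<longrightarrow> (b \<longrightarrow> d \<le> r)" "s \<noteq> 0 \<longrightarrow> s \<le> Suc r"
    "mw (Suc d) s (w @ [True]) = 0"
  shows "dwf d r b (tr (Suc d) s w @ [True]) = 0"
  using assms
proof (induction w arbitrary: s r b)
  case Nil
  then show ?case by auto
next
  case (Cons a w)
  show ?case
  proof (cases a)
    case True
    then show ?thesis using Cons.IH[of s b "Suc r"] Cons.prems by (auto split: if_splits)
  next
    case False
    show ?thesis
    proof (cases "s = 0")
      case True
      have "Suc 0 mod Suc d = 1" using Cons.prems by auto
      then show ?thesis using Cons.IH[of 1 True 0] Cons.prems False True by auto
    next
      case s0: False
      show ?thesis
      proof (cases "Suc s = Suc d")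
        case True
        then show ?thesis using False s0 Cons.IH[of 0 b "Suc r"] Cons.prems by auto
      next
        case False2: False
        then have "Suc s mod Suc d = Suc s" using Cons.prems by auto
        then show ?thesis using False s0 Cons.IH[of "Suc s" b "Suc r"] Cons.prems False2 by auto
      qed
    qed
  qed
qed

lemma pw_set: "x \<in> set (pw c w) \<Longrightarrow> c < x"
  by (induction c w rule: pw.induct) auto

lemma pw_nonempty: "pw c w \<noteq> [] \<longleftrightarrow> True \<in> set w"
  by (induction c w rule: pw.induct) auto

lemma pw_sorted: "sorted_wrt (\<ge>) (pw c w)"
  by (induction c w rule: pw.induct) (auto simp: sorted_wrt_append dest: pw_set)

lemma pw_length: "length (pw c w) = length (filter (\<lambda>x. x) w)"
  by (induction c w rule: pw.induct) auto

lemma pw_hd: "w \<noteq> [] \<Longrightarrow> last w = True \<Longrightarrow> hd (pw c w) = Suc (c + length (filter Not w))"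
proof (induction w arbitrary: c)
  case Nil
  then show ?case by simp
next
  case (Cons a w)
  show ?case
  proof (cases a)
    case False
    then have w: "w \<noteq> []" "last w = True" using Cons.prems by (cases w; simp)+
    have "hd (pw c (a # w)) = hd (pw (Suc c) w)" using False by simp
    also have "\<dots> = Suc (Suc c + length (filter Not w))" using Cons.IH[OF w] .
    finally show ?thesis using False by simp
  next
    case True
    show ?thesis
    proof (cases "w = []")
      case True
      then show ?thesis using \<open>a\<close> by simp
    next
      case False
      then have "last w = True" using Cons.prems by simp
      then have "True \<in> set w" using False last_in_set by metis
      then have ne: "pw c w \<noteq> []" using pw_nonempty by blast
      have "hd (pw c (a # w)) = hd (pw c w)" using \<open>a\<close> ne by simp
      also have "\<dots> = Suc (c + length (filter Not w))" using Cons.IH[OF False \<open>last w = True\<close>] .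
      finally show ?thesis using \<open>a\<close> by simp
    qed
  qed
qed

lemma pw_last: "True \<in> set w \<Longrightarrow> last (pw c w) = Suc (c + length (takeWhile Not w))"
  by (induction c w rule: pw.induct) auto

lemma pw_perim: "w \<noteq> [] \<Longrightarrow> last w = True \<Longrightarrow> perimeter (pw 0 w) = length w"
proof -
  assume a: "w \<noteq> []" "last w = True"
  have "length (filter Not w) + length (filter (\<lambda>x. x) w) = length w"
    using sum_length_filter_compl[of "\<lambda>x. x" w] by (simp add: comp_def)
  then show ?thesis using pw_hd[OF a, of 0] pw_length[of 0 w] a
    by (simp add: perimeter_def)
qed

fun ep :: "nat \<Rightarrow> nat list \<Rightarrow> bool list" where
  "ep c [] = []"
| "ep c (y # ys) = replicate (y - Suc c) False @ True # ep (y - 1) ys"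

lemma pw_replicate: "pw c (replicate k False @ v) = pw (c + k) v"
  by (induction k arbitrary: c) auto

lemma pw_ep: "sorted ys \<Longrightarrow> (\<forall>y\<in>set ys. c < y) \<Longrightarrow> pw c (ep c ys) = rev ys"
proof (induction ys arbitrary: c)
  case Nil
  then show ?case by simp
next
  case (Cons y ys)
  have "c + (y - Suc c) = y - 1" using Cons.prems by auto
  moreover have "pw (y - 1) (ep (y - 1) ys) = rev ys"
    using Cons.prems by (intro Cons.IH) auto
  moreover have "Suc (y - 1) = y" using Cons.prems by auto
  ultimately show ?case by (simp add: pw_replicate)
qed

lemma ep_shift: "ys \<noteq> [] \<Longrightarrow> Suc c < hd ys \<Longrightarrow> ep c ys = False # ep (Suc c) ys"
proof (cases ys)
  case (Cons a l)
  assume "Suc c < hd ys"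
  then have "a - Suc c = Suc (a - Suc (Suc c))" using Cons by simp
  then show ?thesis using Cons by simp
qed simp

lemma ep_pw: "w = [] \<or> last w = True \<Longrightarrow> ep c (rev (pw c w)) = w"
proof (induction c w rule: pw.induct)
  case (1 c)
  then show ?case by simp
next
  case (2 c w)
  then have w: "w \<noteq> []" "last w = True" by (auto split: if_splits)
  then have "True \<in> set w" by (metis last_in_set)
  then have ne: "pw (Suc c) w \<noteq> []" using pw_nonempty by blast
  have "Suc c < hd (rev (pw (Suc c) w))"
  proof -
    have "hd (rev (pw (Suc c) w)) \<in> set (pw (Suc c) w)" using ne
      by (metis hd_in_set rev_is_Nil_conv set_rev)
    then show ?thesis using pw_set by blast
  qed
  then show ?case using ep_shift[of "rev (pw (Suc c) w)" c] ne 2 w by auto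
next
  case (3 c w)
  then have "w = [] \<or> last w = True" by (cases w) auto
  then show ?case using 3 by auto
qed

lemma ep_last: "ys \<noteq> [] \<Longrightarrow> ep c ys \<noteq> [] \<and> last (ep c ys) = True"
proof (induction ys arbitrary: c)
  case (Cons y ys)
  then show ?case by (cases ys) auto
qed simp

lemma bij_pw: "bij_betw (pw 0) (W n) (H n)"
proof (rule bij_betw_imageI)
  show "inj_on (pw 0) (W n)"
    by (rule inj_on_inverseI[where g = "\<lambda>l. ep 0 (rev l)"]) (auto simp: W_def ep_pw)
  show "pw 0 ` W n = H n"
  proof
    show "pw 0 ` W n \<subseteq> H n"
    proof
      fix l assume "l \<in> pw 0 ` W n"
      then obtain w where w: "w \<in> W n" "l = pw 0 w" by auto
      then have a: "w \<noteq> []" "last w = True" "length w = n" by (auto simp: W_def)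
      then have "True \<in> set w" by (metis last_in_set)
      then have "pw 0 w \<noteq> []" using pw_nonempty by blast
      moreover have "\<forall>x\<in>set (pw 0 w). 0 < x" using pw_set by blast
      ultimately show "l \<in> H n" using w a pw_perim[OF a(1,2)] pw_sorted[of 0 w]
        by (auto simp: H_def is_partition_def)
    qed
  next
    show "H n \<subseteq> pw 0 ` W n"
    proof
      fix l assume "l \<in> H n"
      then have l: "l \<noteq> []" "sorted_wrt (\<ge>) l" "\<forall>x\<in>set l. 0 < x" "perimeter l = n"
        by (auto simp: H_def is_partition_def)
      define w where "w = ep 0 (rev l)"
      have "sorted (rev l)" using l(2) by (simp add: sorted_wrt_rev)
      then have pl: "pw 0 w = l" using l(3) pw_ep[of "rev l" 0] by (simp add: w_def)
      have wl: "w \<noteq> []" "last w = True" using ep_last[of "rev l" 0] l(1) by (auto simp: w_def)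
      have "length w = n" using pw_perim[OF wl] pl l(4) by simp
      then have "w \<in> W n" using wl by (simp add: W_def)
      then show "l \<in> pw 0 ` W n" using pl by force
    qed
  qed
qed

lemma modp_filter: "modp d xs = length (filter (\<lambda>x. x mod (d + 1) \<noteq> 1 mod (d + 1)) xs)"
  unfolding modp_def length_filter_conv_card by simp

lemma modp_snoc: "modp d (xs @ [x]) = modp d xs + (if x mod (d + 1) \<noteq> 1 mod (d + 1) then 1 else 0)"
  unfolding modp_filter by simp

fun difr :: "nat \<Rightarrow> nat list \<Rightarrow> nat" where
  "difr d (a # b # xs) = (if int a - int b < int d then 1 else 0) + difr d (b # xs)"
| "difr d _ = 0"

lemma difr_filter: "length (filter (\<lambda>(a, b). int a - int b < int d) (zip xs (tl xs))) = difr d xs"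
  by (induction d xs rule: difr.induct) auto

lemma dif_difr: "dif d xs = difr d xs"
proof -
  have "dif d xs = length (filter (\<lambda>(a, b). int a - int b < int d) (zip xs (tl xs)))"
    unfolding dif_def length_filter_conv_card
  proof (rule arg_cong[where f = card])
    show "{i. i + 1 < length xs \<and> int (xs ! i) - int (xs ! (i + 1)) < int d} =
      {i. i < length (zip xs (tl xs)) \<and> (case zip xs (tl xs) ! i of (a, b) \<Rightarrow> int a - int b < int d)}"
      by (auto simp: nth_tl)
  qed
  then show ?thesis using difr_filter by simp
qed

lemma difr_snoc: "difr d (xs @ [x]) = difr d xs + (if xs \<noteq> [] \<and> int (last xs) - int x < int d then 1 else 0)"
  by (induction d xs rule: difr.induct) auto

lemma dwf_False: "dwf d r False w = dwf d 0 False w"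
proof (induction w arbitrary: r)
  case (Cons a w)
  show ?case
  proof (cases a)
    case False
    have "dwf d (Suc r) False w = dwf d 0 False w" by (rule Cons.IH)
    moreover have "dwf d (Suc 0) False w = dwf d 0 False w" by (rule Cons.IH)
    ultimately show ?thesis using False by simp
  qed simp
qed simp

lemma dwf_False': "dwf d r False w = dwf d r' False w"
  using dwf_False by metis

lemma dwf_True: "dwf d r True w = dwf d r False w + (if True \<in> set w \<and> r + length (takeWhile Not w) < d then 1 else 0)"
proof (induction w arbitrary: r)
  case Nil
  then show ?case by simp
next
  case (Cons a w)
  then show ?case by (cases a) auto
qed

lemma dif_pw: "dif d (pw c w) = dwf d 0 False w"
proof (induction c w rule: pw.induct)
  case (1 c)
  then show ?case by (simp add: dif_difr)
next
  case (2 c w)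
  then show ?case using dwf_False[of d 1 w] by simp
next
  case (3 c w)
  have "dif d (pw c (True # w)) = dif d (pw c w) + (if pw c w \<noteq> [] \<and> int (last (pw c w)) - int (Suc c) < int d then 1 else 0)"
    by (simp add: dif_difr difr_snoc)
  also have "\<dots> = dwf d 0 False w + (if True \<in> set w \<and> length (takeWhile Not w) < d then 1 else 0)"
    using 3 pw_nonempty[of c w] pw_last[of w c] by auto
  also have "\<dots> = dwf d 0 False (True # w)"
    using dwf_True[of d 0 w] by simp
  finally show ?case .
qed

lemma modp_pw: "1 \<le> d \<Longrightarrow> modp d (pw c w) = mw (Suc d) (c mod Suc d) w"
proof (induction c w rule: pw.induct)
  case (1 c)
  then show ?case by (simp add: modp_def)
next
  case (2 c w)
  then show ?case by (simp add: mod_Suc_eq)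
next
  case (3 c w)
  have "(Suc c mod Suc d \<noteq> 1 mod Suc d) = (c mod Suc d \<noteq> 0)"
    using 3(2) by (auto simp: mod_Suc)
  then show ?case using 3 by (simp add: modp_snoc)
qed

definition Psi :: "nat \<Rightarrow> bool list \<Rightarrow> bool list" where
  "Psi m w = tr m 0 (butlast w) @ [True]"

lemma bij_Psi: "bij_betw (Psi m) (W n) (W n)"
proof (rule bij_betw_imageI)
  show "inj_on (Psi m) (W n)"
  proof (rule inj_onI)
    fix u v assume uv: "u \<in> W n" "v \<in> W n" "Psi m u = Psi m v"
    then have "tr m 0 (butlast u) = tr m 0 (butlast v)" by (simp add: Psi_def)
    then have "butlast u = butlast v" by (rule tr_inj)
    moreover have "u \<noteq> []" "last u" "v \<noteq> []" "last v" using uv by (auto simp: W_def)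
    moreover have "u = butlast u @ [True]" using calculation append_butlast_last_id[of u] by simp
    moreover have "v = butlast v @ [True]" using calculation append_butlast_last_id[of v] by simp
    ultimately show "u = v" by metis
  qed
  show "Psi m ` W n = W n"
  proof
    show "Psi m ` W n \<subseteq> W n"
      by (auto simp: W_def Psi_def length_tr)
    show "W n \<subseteq> Psi m ` W n"
    proof
      fix v assume v: "v \<in> W n"
      define w where "w = itr m 0 (butlast v) @ [True]"
      have "Psi m w = butlast v @ [True]" by (simp add: w_def Psi_def tr_itr)
      also have "\<dots> = v"
      proof -
        have "v \<noteq> []" "last v" using v by (auto simp: W_def)
        then show ?thesis using append_butlast_last_id[of v] by simp
      qed
      finally have "Psi m w = v" .
      moreover have "w \<in> W n" using v by (auto simp: W_def w_def length_itr)
      ultimately show "v \<in> Psi m ` W n" by force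
    qed
  qed
qed

theorem theorem3p6:
  fixes d n :: nat
  assumes "d \<ge> 1" and "n \<ge> 1"
  shows "\<exists>\<phi>. bij_betw \<phi> (H n) (H n) \<and>
           (\<forall>p\<in>H n. dif d p \<ge> modp d (\<phi> p)) \<and>
           (\<forall>p\<in>H n. dif d p = 0 \<longleftrightarrow> modp d (\<phi> p) = 0)"
proof -
  define P where "P = pw 0"
  define Q where "Q = inv_into (W n) P"
  define chi where "chi = P \<circ> (Psi (Suc d) \<circ> Q)"
  have bP: "bij_betw P (W n) (H n)" unfolding P_def by (rule bij_pw)
  have bQ: "bij_betw Q (H n) (W n)" unfolding Q_def by (rule bij_betw_inv_into[OF bP])
  have bchi: "bij_betw chi (H n) (H n)"
    unfolding chi_def by (rule bij_betw_trans[OF bij_betw_trans[OF bQ bij_Psi] bP])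
  have key: "modp d p \<le> dif d (chi p) \<and> (modp d p = 0 \<longrightarrow> dif d (chi p) = 0)" if p: "p \<in> H n" for p
  proof -
    define w where "w = Q p"
    have w: "w \<in> W n" using bQ p by (simp add: w_def bij_betw_apply)
    have Pw: "P w = p" unfolding w_def Q_def using bij_betw_inv_into_right[OF bP p] .
    have "w \<noteq> []" "last w" using w by (auto simp: W_def)
    then have wd: "w = butlast w @ [True]" using append_butlast_last_id[of w] by simp
    have m1: "modp d p = mw (Suc d) 0 (butlast w @ [True])"
      using modp_pw[OF assms(1), of 0 w] Pw wd by (simp add: P_def)
    have d1: "dif d (chi p) = dwf d 0 False (tr (Suc d) 0 (butlast w) @ [True])"
      using dif_pw[of d 0 "Psi (Suc d) w"] by (simp add: chi_def P_def Psi_def w_def)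
    show ?thesis
      using claimB[OF assms(1), of 0 False 0 "butlast w"] claimZ[OF assms(1), of 0 False 0 "butlast w"]
        m1 d1 by auto
  qed
  define phi where "phi = inv_into (H n) chi"
  have bphi: "bij_betw phi (H n) (H n)" unfolding phi_def by (rule bij_betw_inv_into[OF bchi])
  have "\<forall>p\<in>H n. dif d p \<ge> modp d (phi p) \<and> (dif d p = 0 \<longleftrightarrow> modp d (phi p) = 0)"
  proof
    fix p assume p: "p \<in> H n"
    have q: "phi p \<in> H n" using bphi p by (simp add: bij_betw_apply)
    have cp: "chi (phi p) = p" unfolding phi_def using bij_betw_inv_into_right[OF bchi p] .
    show "dif d p \<ge> modp d (phi p) \<and> (dif d p = 0 \<longleftrightarrow> modp d (phi p) = 0)"
      using key[OF q] cp by auto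
  qed
  then show ?thesis using bphi by blast
qed

end
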